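(* Let $G_1, G_2, \ldots$ be a sequence of ordered graphs, and suppose that either every $G_i$ is irreducible, or every complement $\overline{G_i}$ is irreducible. Let $\mathcal{P}$ be the set of all ordered graphs $G$ such that $G_i$ is not an induced ordered subgraph of $G$ for every $i \in \mathbb{N}$, and let $\mathcal{P}_n$ be the set of members of $\mathcal{P}$ with vertex set $[n]$. Then either $\lim_{n \to \infty} |\mathcal{P}_n|^{1/n}$ exists, or $\liminf_{n \to \infty} |\mathcal{P}_n|^{1/n} = \infty$.
   Context: An ordered graph of order $n$ is a graph on vertex set $[n]$ with the natural order. $G$ is an induced ordered subgraph of $H$ if there is an injective order-preserving map $V(G)\to V(H)$ preserving adjacency and non-adjacency. A pair of vertices $u<v$ of an ordered graph $G$ separates the edges of $G$ if for every edge $ij\in E(G)$ with $i<j$, either $j\leqslant u$ or $v\leqslant i$. $G$ is irreducible if no pair of vertices separates the edges of $G$. *)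

theory Defs
  imports Complex_Main "HOL-Library.Extended_Real" "HOL-Library.Liminf_Limsup"
begin

text \<open>An ordered graph of order n: vertex set {1..n} with the natural order; the edge set
is stored as pairs (i,j) with i < j.\<close>
type_synonym ograph = "nat \<times> (nat \<times> nat) set"

definition ograph_pairs :: "nat \<Rightarrow> (nat \<times> nat) set" where
  "ograph_pairs n = {(i, j). 1 \<le> i \<and> i < j \<and> j \<le> n}"

definition ograph_wf :: "ograph \<Rightarrow> bool" where
  "ograph_wf G \<longleftrightarrow> snd G \<subseteq> ograph_pairs (fst G)"

definition ocomplement :: "ograph \<Rightarrow> ograph" where
  "ocomplement G = (fst G, ograph_pairs (fst G) - snd G)"

definition induced_osub :: "ograph \<Rightarrow> ograph \<Rightarrow> bool" where
  "induced_osub G H \<longleftrightarrow>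
     (\<exists>f. (\<forall>i\<in>{1..fst G}. f i \<in> {1..fst H}) \<and> strict_mono_on {1..fst G} f \<and>
          (\<forall>i j. 1 \<le> i \<longrightarrow> i < j \<longrightarrow> j \<le> fst G \<longrightarrow>
                 ((i, j) \<in> snd G \<longleftrightarrow> (f i, f j) \<in> snd H)))"

definition separates :: "ograph \<Rightarrow> nat \<Rightarrow> nat \<Rightarrow> bool" where
  "separates G u v \<longleftrightarrow> u \<in> {1..fst G} \<and> v \<in> {1..fst G} \<and> u < v \<and>
     (\<forall>(i, j)\<in>snd G. j \<le> u \<or> v \<le> i)"

definition irreducible_og :: "ograph \<Rightarrow> bool" where
  "irreducible_og G \<longleftrightarrow> \<not> (\<exists>u v. separates G u v)"

text \<open>P_n: ordered graphs on [n] containing no G_i as an induced ordered subgraph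
(identified with their edge sets).\<close>
definition forb_n :: "(nat \<Rightarrow> ograph) \<Rightarrow> nat \<Rightarrow> (nat \<times> nat) set set" where
  "forb_n Gs n = {E. ograph_wf (n, E) \<and> (\<forall>i. \<not> induced_osub (Gs i) (n, E))}"

end

theory Submission
  imports Defs
begin


lemma pow_super:
  fixes a :: "nat \<Rightarrow> nat"
  assumes sup: "\<forall>m n. a m * a n \<le> a (m+n)"
  shows "a m ^ q * a r \<le> a (q*m + r)"
proof (induction q)
  case 0 then show ?case by simp
next
  case (Suc q)
  have "a m ^ Suc q * a r = a m * (a m ^ q * a r)" by simp
  also have "\<dots> \<le> a m * a (q*m + r)" using Suc by simp
  also have "\<dots> \<le> a (m + (q*m + r))" using sup by blast
  finally show ?case by (simp add: add.assoc)
qed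

lemma key_ev:
  fixes a :: "nat \<Rightarrow> nat"
  assumes pos: "\<forall>n. a n \<ge> 1" and sup: "\<forall>m n. a m * a n \<le> a (m+n)"
    and m: "m \<ge> 1" and x: "x < root m (real (a m))"
  shows "eventually (\<lambda>n. x < root n (real (a n))) sequentially"
proof -
  define B where "B = root m (real (a m))"
  have B1: "B \<ge> 1" unfolding B_def using pos m by simp 
  define c where "c = (\<lambda>n::nat. B powr (1 - real m / real n))"
  have "(\<lambda>n. real m / real n) \<longlonglongrightarrow> 0"
    by (intro tendsto_divide_0[OF tendsto_const] filterlim_at_top_imp_at_infinity filterlim_real_sequentially)
  then have "(\<lambda>n. 1 - real m / real n) \<longlonglongrightarrow> 1 - 0"
    by (intro tendsto_diff tendsto_const)
  then have "c \<longlonglongrightarrow> B powr (1 - 0)" unfolding c_def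
    using B1 by (intro tendsto_powr tendsto_const) auto
  then have "c \<longlonglongrightarrow> B" using B1 by simp
  then have ev1: "eventually (\<lambda>n. x < c n) sequentially"
    using x unfolding B_def by (simp add: order_tendstoD(1))
  have ev2: "eventually (\<lambda>n. c n \<le> root n (real (a n))) sequentially"
    using eventually_ge_at_top[of m]
  proof eventually_elim
    case (elim n)
    define q where "q = n div m"
    define r where "r = n mod m"
    have nqr: "n = q*m + r" unfolding q_def r_def by simp
    have rm: "r < m" unfolding r_def using m by simp
    have n1: "n \<ge> 1" using elim m by simp
    have am: "real (a m) > 0" using pos by (metis of_nat_0_less_iff less_le_trans zero_less_one)
    have "a m ^ q * 1 \<le> a m ^ q * a r" using pos by (intro mult_le_mono2) auto
    also have "\<dots> \<le> a n" using pow_super[OF sup, of m q r] nqr by simp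
    finally have "real (a m) ^ q \<le> real (a n)" by (metis of_nat_le_iff of_nat_power mult_1_right)
    then have "(real (a m) ^ q) powr (1 / real n) \<le> real (a n) powr (1 / real n)"
      by (intro powr_mono2) auto
    also have "\<dots> = root n (real (a n))" using n1 by (simp add: root_powr_inverse)
    finally have h1: "(real (a m) ^ q) powr (1 / real n) \<le> root n (real (a n))" .
    have e1: "real (a m) ^ q = real (a m) powr real q" using am by (simp add: powr_realpow)
    have "(real (a m) ^ q) powr (1 / real n) = real (a m) powr (real q * (1 / real n))"
      unfolding e1 by (rule powr_powr)
    also have "real q * (1 / real n) = (1 / real m) * (real m * real q / real n)"
      using m by simp
    also have "real (a m) powr \<dots> = B powr (real m * real q / real n)"
      unfolding B_def using am m by (simp add: root_powr_inverse powr_powr)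
    finally have h2: "(real (a m) ^ q) powr (1 / real n) = B powr (real m * real q / real n)" .
    have "n \<le> m*q + m" using nqr rm by (simp add: mult.commute)
    then have "real n \<le> real m * real q + real m" by (metis of_nat_le_iff of_nat_add of_nat_mult)
    then have "(real n - real m) / real n \<le> (real m * real q) / real n"
      by (intro divide_right_mono) auto
    moreover have "(real n - real m) / real n = 1 - real m / real n"
      using n1 by (simp add: diff_divide_distrib)
    ultimately have "1 - real m / real n \<le> real m * real q / real n" by simp
    then have "c n \<le> B powr (real m * real q / real n)" unfolding c_def
      using B1 by (rule powr_mono)
    then show ?case using h1 h2 by simp
  qed
  from ev1 ev2 show ?thesis by eventually_elim simp
qed

lemma fekete_root:
  fixes a :: "nat \<Rightarrow> nat"
  assumes pos: "\<forall>n. a n \<ge> 1" and sup: "\<forall>m n. a m * a n \<le> a (m+n)"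
  shows "convergent (\<lambda>n. root n (real (a n))) \<or> liminf (\<lambda>n. ereal (root n (real (a n)))) = \<infinity>"
proof (cases "bdd_above ((\<lambda>n. root n (real (a n))) ` {1..})")
  case True
  define S where "S = Sup ((\<lambda>n. root n (real (a n))) ` {1..})"
  have "(\<lambda>n. root n (real (a n))) \<longlonglongrightarrow> S"
  proof (rule order_tendstoI)
    fix y assume "y < S"
    then obtain m where "m \<in> {1..}" "y < root m (real (a m))"
      unfolding S_def using True by (subst (asm) less_cSup_iff) auto
    then show "eventually (\<lambda>n. y < root n (real (a n))) sequentially"
      using key_ev[OF pos sup] by auto
  next
    fix y assume "S < y"
    show "eventually (\<lambda>n. root n (real (a n)) < y) sequentially"
      using eventually_ge_at_top[of 1]
    proof eventually_elim
      case (elim n)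
      then have "root n (real (a n)) \<le> S" unfolding S_def using True
        by (intro cSup_upper) auto
      then show ?case using \<open>S < y\<close> by simp
    qed
  qed
  then show ?thesis unfolding convergent_def by blast
next
  case False
  have "((\<lambda>n. ereal (root n (real (a n)))) \<longlongrightarrow> \<infinity>) sequentially"
    unfolding tendsto_PInfty
  proof
    fix r
    obtain m where "m \<in> {1..}" "r < root m (real (a m))"
    proof -
      have "\<not> (\<forall>x\<in>(\<lambda>n. root n (real (a n))) ` {1..}. x \<le> r)"
        using False unfolding bdd_above_def by blast
      then show ?thesis using that by (auto simp: not_le)
    qed
    then have "eventually (\<lambda>n. r < root n (real (a n))) sequentially"
      using key_ev[OF pos sup] by auto
    then show "eventually (\<lambda>n. ereal r < ereal (root n (real (a n)))) sequentially"
      by simp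
  qed
  then have "liminf (\<lambda>n. ereal (root n (real (a n)))) = \<infinity>"
    by (intro lim_imp_Liminf) auto
  then show ?thesis by simp
qed



definition conc :: "bool \<Rightarrow> nat \<Rightarrow> nat \<Rightarrow> (nat\<times>nat) set \<Rightarrow> (nat\<times>nat) set \<Rightarrow> (nat\<times>nat) set" where
  "conc c p q E1 E2 = E1 \<union> (\<lambda>(i,j). (i+p, j+p)) ` E2 \<union>
     (if c then {(i,j). 1 \<le> i \<and> i \<le> p \<and> p < j \<and> j \<le> p+q} else {})"

lemma no_embed:
  assumes wfG: "F \<subseteq> ograph_pairs k"
    and wf1: "E1 \<subseteq> ograph_pairs p" and wf2: "E2 \<subseteq> ograph_pairs q"
    and n1: "\<not> induced_osub (k,F) (p,E1)" and n2: "\<not> induced_osub (k,F) (q,E2)"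
    and irrc: "c \<Longrightarrow> irreducible_og (ocomplement (k,F))"
    and irrn: "\<not>c \<Longrightarrow> irreducible_og (k,F)"
  shows "\<not> induced_osub (k,F) (p+q, conc c p q E1 E2)"
proof
  assume "induced_osub (k,F) (p+q, conc c p q E1 E2)"
  then obtain f where fr: "\<forall>i\<in>{1..k}. f i \<in> {1..p+q}" and fm: "strict_mono_on {1..k} f"
    and fe: "\<forall>i j. 1 \<le> i \<longrightarrow> i < j \<longrightarrow> j \<le> k \<longrightarrow> ((i,j) \<in> F \<longleftrightarrow> (f i, f j) \<in> conc c p q E1 E2)"
    by (auto simp: induced_osub_def)
  have mono: "\<And>x y. x\<in>{1..k} \<Longrightarrow> y \<in> {1..k} \<Longrightarrow> x < y \<Longrightarrow> f x < f y"
    using fm by (simp add: strict_mono_on_def)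
  consider (L) "\<forall>x\<in>{1..k}. f x \<le> p" | (R) "\<forall>x\<in>{1..k}. p < f x"
    | (M) x y where "x\<in>{1..k}" "y\<in>{1..k}" "f x \<le> p" "p < f y"
    using not_le by blast
  then show False
  proof cases
    case L
    have "induced_osub (k,F) (p,E1)" unfolding induced_osub_def
    proof (intro exI[of _ f] conjI allI impI)
      show "\<forall>i\<in>{1..fst (k,F)}. f i \<in> {1..fst (p,E1)}" using L fr by auto
      show "strict_mono_on {1..fst (k, F)} f" using fm by simp
      fix i j assume ij: "1 \<le> i" "i < j" "j \<le> fst (k,F)"
      then have "f j \<le> p" using L by auto
      then have "(f i, f j) \<in> conc c p q E1 E2 \<longleftrightarrow> (f i, f j) \<in> E1" using wf2 by (auto simp: conc_def ograph_pairs_def)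
      then show "(i,j) \<in> snd (k,F) \<longleftrightarrow> (f i, f j) \<in> snd (p,E1)" using fe ij by auto
    qed
    with n1 show False by simp
  next
    case R
    have "induced_osub (k,F) (q,E2)" unfolding induced_osub_def
    proof (intro exI[of _ "\<lambda>x. f x - p"] conjI allI impI)
      show "\<forall>i\<in>{1..fst (k,F)}. f i - p \<in> {1..fst (q,E2)}" using R fr by auto
      show "strict_mono_on {1..fst (k, F)} (\<lambda>x. f x - p)" unfolding strict_mono_on_def
      proof (intro allI impI)
        fix r s assume rs: "r \<in> {1..fst (k, F)} \<and> s \<in> {1..fst (k, F)} \<and> r < s"
        then have "f r < f s" "p < f r" using mono R by auto
        then show "f r - p < f s - p" by simp
      qed
      fix i j assume ij: "1 \<le> i" "i < j" "j \<le> fst (k,F)"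
      then have fi: "p < f i" "p < f j" using R by auto
      have "(f i, f j) \<in> conc c p q E1 E2 \<longleftrightarrow> (f i - p, f j - p) \<in> E2"
      proof
        assume "(f i, f j) \<in> conc c p q E1 E2"
        moreover have "(f i, f j) \<notin> E1" using wf1 fi by (auto simp: ograph_pairs_def)
        ultimately have "(f i, f j) \<in> (\<lambda>(i,j). (i+p, j+p)) ` E2" using fi
          by (auto simp: conc_def split: if_splits)
        then show "(f i - p, f j - p) \<in> E2" by auto
      next
        assume "(f i - p, f j - p) \<in> E2"
        then have "(\<lambda>(i,j). (i+p, j+p)) (f i - p, f j - p) \<in> (\<lambda>(i,j). (i+p, j+p)) ` E2"
          by (rule imageI)
        then show "(f i, f j) \<in> conc c p q E1 E2" using fi by (simp add: conc_def)
      qed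
      then show "(i,j) \<in> snd (k,F) \<longleftrightarrow> (f i - p, f j - p) \<in> snd (q,E2)" using fe ij by auto
    qed
    with n2 show False by simp
  next
    case M
    define A where "A = {x\<in>{1..k}. f x \<le> p}"
    define t where "t = Max A"
    have finA: "finite A" unfolding A_def by simp
    have "x \<in> A" unfolding A_def using M by simp
    then have tA: "t \<in> A" and xt: "x \<le> t" unfolding t_def using finA by (auto intro: Max_in Max_ge)
    have ft: "f t \<le> p" "t \<in> {1..k}" using tA unfolding A_def by auto
    have ty: "t < y"
    proof (rule ccontr)
      assume "\<not> t < y"
      then have "f y \<le> f t" using strict_mono_on_leD[OF fm] M(2) ft(2) by simp
      then show False using M ft by simp
    qed
    then have t1k: "t + 1 \<in> {1..k}" using M(2) by simp
    have ft1: "p < f (t+1)"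
    proof (rule ccontr)
      assume "\<not> p < f (t+1)"
      then have "t+1 \<in> A" unfolding A_def using t1k by simp
      then have "t+1 \<le> t" unfolding t_def using finA by (simp add: Max_ge)
      then show False by simp
    qed
    have cross: "\<And>i j. 1 \<le> i \<Longrightarrow> i \<le> t \<Longrightarrow> t < j \<Longrightarrow> j \<le> k \<Longrightarrow> f i \<le> p \<and> p < f j \<and> 1 \<le> f i \<and> f j \<le> p + q"
    proof -
      fix i j assume a: "1 \<le> i" "i \<le> t" "t < j" "j \<le> k"
      have "f i \<le> f t" using strict_mono_on_leD[OF fm, of i t] a ft(2) by simp
      moreover have "f (t+1) \<le> f j" using strict_mono_on_leD[OF fm, of "t+1" j] a t1k by simp
      moreover have "f i \<in> {1..p+q}" "f j \<in> {1..p+q}" using fr a ft(2) by auto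
      ultimately show "f i \<le> p \<and> p < f j \<and> 1 \<le> f i \<and> f j \<le> p + q" using ft ft1 by auto
    qed
    show False
    proof (cases c)
      case False
      have "separates (k,F) t (t+1)" unfolding separates_def
      proof (intro conjI)
        show "t \<in> {1..fst (k,F)}" "t+1 \<in> {1..fst (k,F)}" "t < t+1" using ft(2) t1k by auto
        show "\<forall>(i, j)\<in>snd (k,F). j \<le> t \<or> t+1 \<le> i"
        proof -
          have "j \<le> t \<or> t+1 \<le> i" if ij0: "(i,j) \<in> F" for i j
          proof (rule ccontr)
          assume "\<not> (j \<le> t \<or> t+1 \<le> i)"
          then have ij: "(i,j) \<in> F" "\<not> j \<le> t" "i \<le> t" using ij0 by auto
          then have b: "1 \<le> i" "i < j" "j \<le> k" using wfG by (auto simp: ograph_pairs_def)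
          then have "(f i, f j) \<in> conc c p q E1 E2" using fe ij by auto
          moreover have "f i \<le> p \<and> p < f j" using cross[of i j] b ij by simp
          ultimately show False using False wf1 wf2
            by (auto simp: conc_def ograph_pairs_def)
          qed
          then show ?thesis by auto
        qed
      qed
      then show False using irrn[OF False] unfolding irreducible_og_def by blast
    next
      case True
      have oc: "ocomplement (k,F) = (k, ograph_pairs k - F)" by (simp add: ocomplement_def)
      have "separates (k, ograph_pairs k - F) t (t+1)" unfolding separates_def
      proof (intro conjI)
        show "t \<in> {1..fst (k,ograph_pairs k - F)}"
          "t+1 \<in> {1..fst (k,ograph_pairs k - F)}" "t < t+1" using ft(2) t1k by auto
        show "\<forall>(i, j)\<in>snd (k, ograph_pairs k - F). j \<le> t \<or> t+1 \<le> i"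
        proof -
          have "j \<le> t \<or> t+1 \<le> i" if ij0: "(i,j) \<in> ograph_pairs k - F" for i j
          proof (rule ccontr)
          assume "\<not> (j \<le> t \<or> t+1 \<le> i)"
          then have ij: "(i,j) \<in> ograph_pairs k" "(i,j) \<notin> F" "\<not> j \<le> t" "i \<le> t" using ij0 by auto
          then have b: "1 \<le> i" "i < j" "j \<le> k" by (auto simp: ograph_pairs_def)
          have "f i \<le> p \<and> p < f j \<and> 1 \<le> f i \<and> f j \<le> p + q" using cross[of i j] b ij by simp
          then have "(f i, f j) \<in> conc c p q E1 E2" using True by (auto simp: conc_def)
          then show False using fe ij b by auto
          qed
          then show ?thesis by auto
        qed
      qed
      then show False using irrc[OF True] unfolding irreducible_og_def oc by blast
    qed
  qed
qed



lemma finite_pairs: "finite (ograph_pairs n)"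
proof -
  have "ograph_pairs n \<subseteq> {1..n} \<times> {1..n}" by (auto simp: ograph_pairs_def)
  then show ?thesis by (rule finite_subset) simp
qed

lemma finite_forb: "finite (forb_n Gs n)"
proof -
  have "forb_n Gs n \<subseteq> Pow (ograph_pairs n)" by (auto simp: forb_n_def ograph_wf_def)
  then show ?thesis using finite_pairs by (metis finite_Pow_iff finite_subset)
qed

lemma conc_wf:
  assumes "E1 \<subseteq> ograph_pairs p" "E2 \<subseteq> ograph_pairs q"
  shows "conc c p q E1 E2 \<subseteq> ograph_pairs (p+q)"
  using assms by (auto simp: conc_def ograph_pairs_def)

lemma conc_in:
  assumes wf: "\<forall>i. ograph_wf (Gs i)"
    and irrc: "c \<Longrightarrow> \<forall>i. irreducible_og (ocomplement (Gs i))"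
    and irrn: "\<not>c \<Longrightarrow> \<forall>i. irreducible_og (Gs i)"
    and E1: "E1 \<in> forb_n Gs p" and E2: "E2 \<in> forb_n Gs q"
  shows "conc c p q E1 E2 \<in> forb_n Gs (p+q)"
proof -
  have w1: "E1 \<subseteq> ograph_pairs p" and w2: "E2 \<subseteq> ograph_pairs q"
    using E1 E2 by (auto simp: forb_n_def ograph_wf_def)
  have "\<not> induced_osub (Gs i) (p+q, conc c p q E1 E2)" for i
  proof -
    obtain k F where G: "Gs i = (k,F)" by fastforce
    show ?thesis unfolding G
    proof (rule no_embed)
      show "F \<subseteq> ograph_pairs k" using wf G by (metis ograph_wf_def fst_conv snd_conv)
      show "E1 \<subseteq> ograph_pairs p" "E2 \<subseteq> ograph_pairs q" by fact+
      have "\<not> induced_osub (Gs i) (p, E1)" "\<not> induced_osub (Gs i) (q, E2)"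
        using E1 E2 by (simp_all add: forb_n_def)
      then show "\<not> induced_osub (k, F) (p, E1)" "\<not> induced_osub (k, F) (q, E2)"
        using G by simp_all
      show "irreducible_og (ocomplement (k, F))" if c using irrc[OF that] G by metis
      show "irreducible_og (k, F)" if "\<not>c" using irrn[OF that] G by metis
    qed
  qed
  then show ?thesis using conc_wf[OF w1 w2] by (auto simp: forb_n_def ograph_wf_def)
qed

lemma conc_inj:
  "inj_on (\<lambda>(E1,E2). conc c p q E1 E2) (forb_n Gs p \<times> forb_n Gs q)"
proof (rule inj_onI, clarify)
  fix E1 E2 E1' E2'
  assume a: "E1 \<in> forb_n Gs p" "E2 \<in> forb_n Gs q" "E1' \<in> forb_n Gs p" "E2' \<in> forb_n Gs q"
    and eq: "conc c p q E1 E2 = conc c p q E1' E2'"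
  have w: "E1 \<subseteq> ograph_pairs p" "E2 \<subseteq> ograph_pairs q" "E1' \<subseteq> ograph_pairs p" "E2' \<subseteq> ograph_pairs q"
    using a by (auto simp: forb_n_def ograph_wf_def)
  have r1: "X1 = {(i,j). (i,j) \<in> conc c p q X1 X2 \<and> j \<le> p}"
    if "X1 \<subseteq> ograph_pairs p" "X2 \<subseteq> ograph_pairs q" for X1 X2
    using that by (auto simp: conc_def ograph_pairs_def)
  have r2: "X2 = {(i,j). (i+p,j+p) \<in> conc c p q X1 X2 \<and> 1 \<le> i}"
    if "X1 \<subseteq> ograph_pairs p" "X2 \<subseteq> ograph_pairs q" for X1 X2
    using that by (auto simp: conc_def ograph_pairs_def)
  show "E1 = E1' \<and> E2 = E2'"
    using r1[OF w(1,2)] r1[OF w(3,4)] r2[OF w(1,2)] r2[OF w(3,4)] eq by metis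
qed

lemma supermult:
  assumes wf: "\<forall>i. ograph_wf (Gs i)"
    and irrc: "c \<Longrightarrow> \<forall>i. irreducible_og (ocomplement (Gs i))"
    and irrn: "\<not>c \<Longrightarrow> \<forall>i. irreducible_og (Gs i)"
  shows "card (forb_n Gs p) * card (forb_n Gs q) \<le> card (forb_n Gs (p+q))"
proof -
  have "card (forb_n Gs p) * card (forb_n Gs q) = card (forb_n Gs p \<times> forb_n Gs q)"
    by (simp add: card_cartesian_product)
  also have "\<dots> \<le> card (forb_n Gs (p+q))"
  proof (rule card_inj_on_le[OF conc_inj[of c p q Gs]])
    show "(\<lambda>(E1,E2). conc c p q E1 E2) ` (forb_n Gs p \<times> forb_n Gs q) \<subseteq> forb_n Gs (p+q)"
      using conc_in[OF wf irrc irrn] by auto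
    show "finite (forb_n Gs (p+q))" by (rule finite_forb)
  qed
  finally show ?thesis .
qed

lemma hered:
  assumes "E \<in> forb_n Gs m" "n \<le> m"
  shows "E \<inter> ograph_pairs n \<in> forb_n Gs n"
proof -
  have "\<not> induced_osub (Gs i) (n, E \<inter> ograph_pairs n)" for i
  proof
    assume "induced_osub (Gs i) (n, E \<inter> ograph_pairs n)"
    then obtain f where fr: "\<forall>x\<in>{1..fst (Gs i)}. f x \<in> {1..n}" and fm: "strict_mono_on {1..fst (Gs i)} f"
      and fe: "\<forall>x y. 1 \<le> x \<longrightarrow> x < y \<longrightarrow> y \<le> fst (Gs i) \<longrightarrow> ((x,y) \<in> snd (Gs i) \<longleftrightarrow> (f x, f y) \<in> E \<inter> ograph_pairs n)"
      by (auto simp: induced_osub_def)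
    have "induced_osub (Gs i) (m, E)" unfolding induced_osub_def
    proof (intro exI[of _ f] conjI allI impI)
      show "\<forall>x\<in>{1..fst (Gs i)}. f x \<in> {1..fst (m,E)}" using fr assms(2) by fastforce
      show "strict_mono_on {1..fst (Gs i)} f" by fact
      fix x y assume xy: "1 \<le> x" "x < y" "y \<le> fst (Gs i)"
      then have "f x < f y" using fm by (simp add: strict_mono_on_def)
      moreover have "f x \<in> {1..n}" "f y \<in> {1..n}" using fr xy by auto
      ultimately have "(f x, f y) \<in> ograph_pairs n" by (auto simp: ograph_pairs_def)
      then show "(x, y) \<in> snd (Gs i) \<longleftrightarrow> (f x, f y) \<in> snd (m, E)" using fe xy by auto
    qed
    then show False using assms(1) by (auto simp: forb_n_def)
  qed
  then show ?thesis by (auto simp: forb_n_def ograph_wf_def)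
qed

theorem theorem30:
  fixes Gs :: "nat \<Rightarrow> ograph"
  assumes wf: "\<forall>i. ograph_wf (Gs i)"
    and irr: "(\<forall>i. irreducible_og (Gs i)) \<or> (\<forall>i. irreducible_og (ocomplement (Gs i)))"
  shows "convergent (\<lambda>n. root n (real (card (forb_n Gs n))))
         \<or> liminf (\<lambda>n. ereal (root n (real (card (forb_n Gs n))))) = \<infinity>"
proof (cases "\<forall>n. card (forb_n Gs n) \<ge> 1")
  case True
  define c where "c = (\<not> (\<forall>i. irreducible_og (Gs i)))"
  have irrc: "c \<Longrightarrow> \<forall>i. irreducible_og (ocomplement (Gs i))" using irr c_def by blast
  have irrn: "\<not>c \<Longrightarrow> \<forall>i. irreducible_og (Gs i)" using c_def by blast
  show ?thesis
    by (rule fekete_root[OF True]) (use supermult[OF wf irrc irrn] in blast)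
next
  case False
  then obtain n0 where "card (forb_n Gs n0) = 0" by (auto simp: not_le)
  then have e0: "forb_n Gs n0 = {}" using finite_forb by (metis card_0_eq)
  have "eventually (\<lambda>n. root n (real (card (forb_n Gs n))) = 0) sequentially"
    using eventually_ge_at_top[of n0]
  proof eventually_elim
    case (elim n)
    have "forb_n Gs n = {}" using hered[OF _ elim] e0 by blast
    then show ?case by simp
  qed
  then have "(\<lambda>n. root n (real (card (forb_n Gs n)))) \<longlonglongrightarrow> 0"
    by (rule tendsto_eventually)
  then show ?thesis unfolding convergent_def by blast
qed


end
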